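(* Under the hypotheses and notation of the context, let $n\ge 2$ and assume $\phi_n(0)\ne0$ and $\phi_{n-1}(0)\neq 0$. Then $$\phi_n'(z)=A_n(z)\phi_{n-1}(z)-B_n(z)\phi_n(z),$$ and, with the operators $L_{n,1}=\frac{d}{dz}+B_n(z)$ and $L_{n,2}=-\frac{d}{dz}-B_{n-1}(z)+\frac{A_{n-1}(z)\kappa_{n-1}}{z\kappa_{n-2}}+\frac{A_{n-1}(z)\kappa_n\phi_{n-1}(0)}{\kappa_{n-2}\phi_n(0)}$, one has $$L_{n,1}\phi_n(z)=A_n(z)\phi_{n-1}(z),\qquad L_{n,2}\phi_{n-1}(z)=\frac{A_{n-1}(z)}{z}\,\frac{\phi_{n-1}(0)\kappa_{n-1}}{\phi_n(0)\kappa_{n-2}}\,\phi_n(z).$$ Consequently $\phi_n$ satisfies the second order differential equation $$L_{n,2}\Big(\frac{1}{A_n(z)}L_{n,1}\Big)\phi_n(z)=\frac{A_{n-1}(z)}{z}\,\frac{\phi_{n-1}(0)\kappa_{n-1}}{\phi_n(0)\kappa_{n-2}}\,\phi_n(z).$$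
   Context: Let $w$ be a positive weight function on the unit circle normalized by $\int_{|\zeta|=1}w(\zeta)\frac{d\zeta}{i\zeta}=1$ (contour integrals counterclockwise), with orthonormal polynomials $\phi_n(z)=\kappa_nz^n+\cdots$, $\kappa_n>0$, $\int_{|\zeta|=1}\phi_m\overline{\phi_n}w\frac{d\zeta}{i\zeta}=\delta_{m,n}$. For $f(z)=\sum_{k=0}^na_kz^k$ of degree $n$, $f^*(z)=\sum_{k=0}^n\overline{a_k}z^{n-k}$. Let $v=-\log w$ and assume $w$ is differentiable in a neighborhood of the unit circle, has moments of all integral orders, and that $\int_{|\zeta|=1}\frac{v'(z)-v'(\zeta)}{z-\zeta}\zeta^mw(\zeta)\frac{d\zeta}{i\zeta}$ exists for all integers $m$. For $k\ge1$ with $\phi_k(0)\ne0$ define $$A_k(z)=k\frac{\kappa_{k-1}}{\kappa_k}+i\frac{\kappa_{k-1}}{\phi_k(0)}z\int_{|\zeta|=1}\frac{v'(z)-v'(\zeta)}{z-\zeta}\phi_k(\zeta)\overline{\phi_k^*(\zeta)}w(\zeta)\,d\zeta,$$ $$B_k(z)=-i\int_{|\zeta|=1}\frac{v'(z)-v'(\zeta)}{z-\zeta}\phi_k(\zeta)\Big[\overline{\phi_k(\zeta)}-\frac{\kappa_k}{\phi_k(0)}\overline{\phi_k^*(\zeta)}\Big]w(\zeta)\,d\zeta .$$ *)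

theory Defs
  imports "HOL-Complex_Analysis.Complex_Analysis"
begin

abbreviation ucirc :: "real \<Rightarrow> complex" where "ucirc \<equiv> circlepath 0 1"

text \<open>v' where v = - log w; for any local branch of log this is - w'/w.\<close>
definition vp :: "(complex \<Rightarrow> complex) \<Rightarrow> complex \<Rightarrow> complex" where
  "vp w z = - deriv w z / w z"

definition pstar :: "complex poly \<Rightarrow> complex poly" where
  "pstar p = reflect_poly (map_poly cnj p)"

text \<open>kappa_k, the (positive real) leading coefficient of phi_k.\<close>
definition kap :: "(nat \<Rightarrow> complex poly) \<Rightarrow> nat \<Rightarrow> real" where
  "kap phi k = Re (lead_coeff (phi k))"

definition Acoef :: "(complex \<Rightarrow> complex) \<Rightarrow> (nat \<Rightarrow> complex poly) \<Rightarrow> nat \<Rightarrow> complex \<Rightarrow> complex" where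
  "Acoef w phi k z =
     of_real (real k * kap phi (k - 1) / kap phi k)
     + \<i> * of_real (kap phi (k - 1)) / poly (phi k) 0 * z *
       contour_integral ucirc
         (\<lambda>\<zeta>. (vp w z - vp w \<zeta>) / (z - \<zeta>) * poly (phi k) \<zeta> * cnj (poly (pstar (phi k)) \<zeta>) * w \<zeta>)"

definition Bcoef :: "(complex \<Rightarrow> complex) \<Rightarrow> (nat \<Rightarrow> complex poly) \<Rightarrow> nat \<Rightarrow> complex \<Rightarrow> complex" where
  "Bcoef w phi k z =
     - \<i> * contour_integral ucirc
         (\<lambda>\<zeta>. (vp w z - vp w \<zeta>) / (z - \<zeta>) * poly (phi k) \<zeta> *
               (cnj (poly (phi k) \<zeta>) - of_real (kap phi k) / poly (phi k) 0 * cnj (poly (pstar (phi k)) \<zeta>))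
               * w \<zeta>)"

definition Lop1 :: "(complex \<Rightarrow> complex) \<Rightarrow> (nat \<Rightarrow> complex poly) \<Rightarrow> nat \<Rightarrow> (complex \<Rightarrow> complex) \<Rightarrow> complex \<Rightarrow> complex" where
  "Lop1 w phi n f z = deriv f z + Bcoef w phi n z * f z"

definition Lop2 :: "(complex \<Rightarrow> complex) \<Rightarrow> (nat \<Rightarrow> complex poly) \<Rightarrow> nat \<Rightarrow> (complex \<Rightarrow> complex) \<Rightarrow> complex \<Rightarrow> complex" where
  "Lop2 w phi n f z =
     - deriv f z - Bcoef w phi (n - 1) z * f z
     + Acoef w phi (n - 1) z * of_real (kap phi (n - 1)) / (z * of_real (kap phi (n - 2))) * f z
     + Acoef w phi (n - 1) z * of_real (kap phi n) * poly (phi (n - 1)) 0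
         / (of_real (kap phi (n - 2)) * poly (phi n) 0) * f z"

end

theory Submission
  imports Defs
begin


lemma sphere_infinite: "infinite (sphere (0::complex) 1)"
proof
  assume fin: "finite (sphere (0::complex) 1)"
  have "{-1..1::real} \<subseteq> Re ` sphere 0 1"
  proof
    fix x :: real assume x: "x \<in> {-1..1}"
    define y where "y = Complex x (sqrt (1 - x^2))"
    have "x^2 \<le> 1" using x by (auto simp: abs_square_le_1 abs_le_iff)
    then have "1 - x^2 \<ge> 0" by simp
    then have "norm y = 1" by (simp add: y_def cmod_def)
    then show "x \<in> Re ` sphere 0 1" by (intro image_eqI[of _ _ y]) (auto simp: y_def)
  qed
  then have "finite {-1..1::real}" using fin by (meson finite_imageI finite_subset)
  then show False using infinite_Icc[of "-1::real" 1] by simp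
qed

lemma poly_eq_on_sphere:
  fixes p q :: "complex poly"
  assumes "\<And>z. z \<in> sphere 0 1 \<Longrightarrow> poly p z = poly q z"
  shows "p = q"
proof (rule ccontr)
  assume "p \<noteq> q"
  then have "p - q \<noteq> 0" by simp
  then have "finite {z. poly (p - q) z = 0}" by (rule poly_roots_finite)
  moreover have "sphere 0 1 \<subseteq> {z. poly (p - q) z = 0}" using assms by auto
  ultimately show False using sphere_infinite finite_subset by blast
qed

lemma sphere_cnj: assumes "z \<in> sphere (0::complex) 1" shows "cnj z = inverse z"
proof -
  have "norm z = 1" using assms by simp
  then have "z * cnj z = 1" using complex_norm_square[of z] by simp
  then show ?thesis by (metis Fields.inverse_unique)
qed

lemma sphere_nz: "z \<in> sphere (0::complex) 1 \<Longrightarrow> z \<noteq> 0"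
  by auto

lemma degree_map_cnj [simp]: "degree (map_poly cnj p) = degree p"
  by (rule degree_map_poly) auto

lemma coeff_map_cnj [simp]: "coeff (map_poly cnj p) n = cnj (coeff p n)"
  by (rule coeff_map_poly) auto

lemma pstar_circ:
  assumes "z \<in> sphere (0::complex) 1"
  shows "poly (pstar p) z = z ^ degree p * cnj (poly p z)"
proof -
  have "z \<noteq> 0" using assms by auto
  then have "poly (pstar p) z = z ^ degree p * poly (map_poly cnj p) (inverse z)"
    unfolding pstar_def by (simp add: poly_reflect_poly_nz)
  also have "inverse z = cnj z" using sphere_cnj[OF assms] by simp
  also have "poly (map_poly cnj p) (cnj z) = cnj (poly p z)" by (rule poly_cnj[symmetric])
  finally show ?thesis .
qed

lemma coeff_pstar:
  "coeff (pstar p) n = (if n > degree p then 0 else cnj (coeff p (degree p - n)))"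
  unfolding pstar_def by (simp add: coeff_reflect_poly)

lemma degree_pstar_le: "degree (pstar p) \<le> degree p"
  unfolding pstar_def using degree_reflect_poly_le[of "map_poly cnj p"] by simp



locale opuc =
  fixes w :: "complex \<Rightarrow> complex" and S :: "complex set" and phi :: "nat \<Rightarrow> complex poly"
  assumes S_open: "open S" and circ_S: "sphere 0 1 \<subseteq> S"
    and w_holo: "w holomorphic_on S" and w_nz: "\<forall>x\<in>S. w x \<noteq> 0"
    and phi_deg: "\<forall>k. degree (phi k) = k"
    and phi_lead: "\<forall>k. Im (lead_coeff (phi k)) = 0 \<and> Re (lead_coeff (phi k)) > 0"
    and phi_orth: "\<forall>j k. contour_integral ucirc
        (\<lambda>\<zeta>. poly (phi j) \<zeta> * cnj (poly (phi k) \<zeta>) * w \<zeta> / (\<i> * \<zeta>)) = (if j = k then 1 else 0)"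
begin

definition ip :: "complex poly \<Rightarrow> complex poly \<Rightarrow> complex" where
  "ip p q = contour_integral ucirc (\<lambda>\<zeta>. poly p \<zeta> * cnj (poly q \<zeta>) * w \<zeta> / (\<i> * \<zeta>))"

abbreviation kp where "kp k \<equiv> kap phi k"

lemma pi_ucirc [simp]: "path_image ucirc = sphere 0 1"
  by (simp add: path_image_circlepath_nonneg)

lemma w_cont: "continuous_on (sphere 0 1) w"
  using w_holo circ_S holomorphic_on_imp_continuous_on continuous_on_subset by blast

lemma cont_int: "continuous_on (sphere 0 1) f \<Longrightarrow> f contour_integrable_on ucirc"
  by (rule contour_integrable_continuous_circlepath) simp

lemma ip_int: "(\<lambda>\<zeta>. poly p \<zeta> * cnj (poly q \<zeta>) * w \<zeta> / (\<i> * \<zeta>)) contour_integrable_on ucirc"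
  by (rule cont_int) (auto intro!: continuous_intros w_cont)

lemma ip_orth: "ip (phi j) (phi k) = (if j = k then 1 else 0)"
  using phi_orth unfolding ip_def by blast

lemma deg [simp]: "degree (phi k) = k" using phi_deg by blast

lemma lead_phi: "lead_coeff (phi k) = of_real (kp k)"
  using phi_lead unfolding kap_def by (simp add: complex_eq_iff)

lemma coeff_phi_k: "coeff (phi k) k = of_real (kp k)"
  using lead_phi[of k] by simp

lemma kp_pos: "kp k > 0"
  using phi_lead unfolding kap_def by auto

lemma kp_nz [simp]: "kp k \<noteq> 0" and kpc_nz [simp]: "(of_real (kp k) :: complex) \<noteq> 0"
  using kp_pos[of k] by auto

lemma phi_nz: "phi k \<noteq> 0"
  using coeff_phi_k[of k] by auto

lemma coeff_phi_above: "n > k \<Longrightarrow> coeff (phi k) n = 0"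
  by (simp add: coeff_eq_0)

lemma ip_zero_left [simp]: "ip 0 r = 0" and ip_zero_right [simp]: "ip r 0 = 0"
  unfolding ip_def by simp_all

lemma ip_add_left: "ip (p + q) r = ip p r + ip q r"
proof -
  have "ip (p+q) r = contour_integral ucirc (\<lambda>\<zeta>. poly p \<zeta> * cnj (poly r \<zeta>) * w \<zeta> / (\<i> * \<zeta>)
          + poly q \<zeta> * cnj (poly r \<zeta>) * w \<zeta> / (\<i> * \<zeta>))"
    unfolding ip_def by (simp add: algebra_simps add_divide_distrib)
  also have "\<dots> = ip p r + ip q r" unfolding ip_def by (rule contour_integral_add[OF ip_int ip_int])
  finally show ?thesis .
qed

lemma ip_smult_left: "ip (smult c p) r = c * ip p r"
proof -
  have "ip (smult c p) r = contour_integral ucirc (\<lambda>\<zeta>. c * (poly p \<zeta> * cnj (poly r \<zeta>) * w \<zeta> / (\<i> * \<zeta>)))"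
    unfolding ip_def by (simp add: algebra_simps)
  also have "\<dots> = c * ip p r" unfolding ip_def by (rule contour_integral_lmul[OF ip_int])
  finally show ?thesis .
qed

lemma ip_sum_left: "ip (\<Sum>k\<in>A. f k) r = (\<Sum>k\<in>A. ip (f k) r)"
  by (induction A rule: infinite_finite_induct) (auto simp: ip_add_left)

lemma ip_add_right: "ip r (p + q) = ip r p + ip r q"
proof -
  have "ip r (p+q) = contour_integral ucirc (\<lambda>\<zeta>. poly r \<zeta> * cnj (poly p \<zeta>) * w \<zeta> / (\<i> * \<zeta>)
          + poly r \<zeta> * cnj (poly q \<zeta>) * w \<zeta> / (\<i> * \<zeta>))"
    unfolding ip_def by (simp add: algebra_simps add_divide_distrib)
  also have "\<dots> = ip r p + ip r q" unfolding ip_def by (rule contour_integral_add[OF ip_int ip_int])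
  finally show ?thesis .
qed

lemma ip_smult_right: "ip r (smult c p) = cnj c * ip r p"
proof -
  have "ip r (smult c p) = contour_integral ucirc (\<lambda>\<zeta>. cnj c * (poly r \<zeta> * cnj (poly p \<zeta>) * w \<zeta> / (\<i> * \<zeta>)))"
    unfolding ip_def by (simp add: algebra_simps)
  also have "\<dots> = cnj c * ip r p" unfolding ip_def by (rule contour_integral_lmul[OF ip_int])
  finally show ?thesis .
qed

lemma ip_sum_right: "ip r (\<Sum>k\<in>A. f k) = (\<Sum>k\<in>A. ip r (f k))"
  by (induction A rule: infinite_finite_induct) (auto simp: ip_add_right)

lemma ip_diff_left: "ip (p - q) r = ip p r - ip q r"
  using ip_add_left[of "p - q" q r] by simp

lemma ip_diff_right: "ip r (p - q) = ip r p - ip r q"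
  using ip_add_right[of r "p - q" q] by simp

lemma span_exists: "degree p \<le> m \<Longrightarrow> \<exists>c. p = (\<Sum>k\<le>m. smult (c k) (phi k))"
proof (induction m arbitrary: p)
  case 0
  then obtain a where pa: "p = [:a:]" by (metis degree_eq_zeroE le_zero_eq)
  have "phi 0 = [:of_real (kp 0):]"
    by (metis coeff_phi_k deg degree_eq_zeroE coeff_pCons_0)
  then have "p = smult (a / of_real (kp 0)) (phi 0)" using pa by simp
  then show ?case by (intro exI[of _ "\<lambda>_. a / of_real (kp 0)"]) simp
next
  case (Suc m)
  define a where "a = coeff p (Suc m) / of_real (kp (Suc m))"
  define p' where "p' = p - smult a (phi (Suc m))"
  have "degree p' \<le> Suc m" unfolding p'_def
    using Suc.prems by (intro degree_diff_le) auto
  moreover have "coeff p' (Suc m) = 0" unfolding p'_def a_def by (simp add: coeff_phi_k)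
  ultimately have "degree p' \<le> m"
    by (metis Suc_leI degree_le le_antisym linorder_neqE_nat coeff_eq_0 not_less_eq_eq)
  then obtain c where c: "p' = (\<Sum>k\<le>m. smult (c k) (phi k))" using Suc.IH by blast
  have "p = (\<Sum>k\<le>Suc m. smult ((c(Suc m := a)) k) (phi k))"
    using c unfolding p'_def by (simp add: algebra_simps)
  then show ?case by blast
qed

lemma expand: assumes "degree p \<le> m" shows "p = (\<Sum>k\<le>m. smult (ip p (phi k)) (phi k))"
proof -
  obtain c where c: "p = (\<Sum>k\<le>m. smult (c k) (phi k))" using span_exists[OF assms] by blast
  have "ip p (phi j) = c j" if "j \<le> m" for j
  proof -
    have "ip p (phi j) = (\<Sum>k\<le>m. c k * (if k = j then 1 else 0))"
      by (subst c) (simp add: ip_sum_left ip_smult_left ip_orth)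
    also have "\<dots> = c j" using that by (simp add: if_distrib sum.delta cong: if_cong)
    finally show ?thesis .
  qed
  then show ?thesis by (subst c) (auto intro!: sum.cong)
qed

lemma ip_coeff: assumes "degree r \<le> n" shows "ip r (phi n) = coeff r n / of_real (kp n)"
proof -
  have "coeff r n = coeff (\<Sum>k\<le>n. smult (ip r (phi k)) (phi k)) n"
    using expand[OF assms] by metis
  also have "\<dots> = (\<Sum>k\<le>n. ip r (phi k) * coeff (phi k) n)" by (simp add: coeff_sum)
  also have "\<dots> = (\<Sum>k\<le>n. if k = n then ip r (phi n) * of_real (kp n) else 0)"
    by (intro sum.cong) (auto simp: coeff_phi_k coeff_phi_above)
  also have "\<dots> = ip r (phi n) * of_real (kp n)" by simp
  finally show ?thesis by simp
qed

lemma ip_conj: assumes "degree r \<le> n" shows "ip (phi n) r = cnj (ip r (phi n))"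
proof -
  have "ip (phi n) r = ip (phi n) (\<Sum>k\<le>n. smult (ip r (phi k)) (phi k))"
    using expand[OF assms] by metis
  also have "\<dots> = (\<Sum>k\<le>n. cnj (ip r (phi k)) * (if n = k then 1 else 0))"
    by (simp add: ip_sum_right ip_smult_right ip_orth)
  also have "\<dots> = cnj (ip r (phi n))" by (simp add: if_distrib sum.delta cong: if_cong)
  finally show ?thesis .
qed

lemma ip_top: "degree r \<le> n \<Longrightarrow> ip (phi n) r = cnj (coeff r n) / of_real (kp n)"
  by (simp add: ip_conj ip_coeff)

lemma ip_low: "degree r < n \<Longrightarrow> ip (phi n) r = 0"
  by (simp add: ip_top coeff_eq_0)

lemma ip_low': "degree r < n \<Longrightarrow> ip r (phi n) = 0"
  by (simp add: ip_coeff coeff_eq_0)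

end


lemma cd_alg:
  fixes X Y X2 Y2 b c b2 c2 a a2 k K :: complex
  assumes e1: "K*X = k*b + a*Y" and e2: "K*Y = k*c + a2*X" and e3: "K*X2 = k*b2 + a2*Y2"
    and e4: "K*Y2 = k*c2 + a*X2" and e5: "K*K = k*k + a*a2" and k: "k \<noteq> 0"
  shows "Y*Y2 - X*X2 = c*c2 - b*b2"
proof -
  have "k*k*(c*c2 - b*b2) = (k*c)*(k*c2) - (k*b)*(k*b2)" by algebra
  also have "\<dots> = (K*Y - a2*X)*(K*Y2 - a*X2) - (K*X - a*Y)*(K*X2 - a2*Y2)"
    using e1 e2 e3 e4 by (simp add: algebra_simps)
  also have "\<dots> = (K*K - a*a2)*(Y*Y2 - X*X2)" by algebra
  also have "\<dots> = k*k*(Y*Y2 - X*X2)" using e5 by simp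
  finally show ?thesis using k by simp
qed

lemma poly_le_sum: "degree (p::complex poly) \<le> n \<Longrightarrow> poly p x = (\<Sum>i\<le>n. coeff p i * x ^ i)"
proof -
  assume "degree p \<le> n"
  then have "p = (\<Sum>i\<le>n. monom (coeff p i) i)" by (simp add: poly_as_sum_of_monoms')
  then have "poly p x = poly (\<Sum>i\<le>n. monom (coeff p i) i) x" by simp
  also have "\<dots> = (\<Sum>i\<le>n. coeff p i * x ^ i)" by (simp add: poly_sum) (intro sum.cong, auto simp: poly_monom)
  finally show ?thesis .
qed

context opuc
begin

abbreviation kc :: "nat \<Rightarrow> complex" where "kc k \<equiv> complex_of_real (kap phi k)"

lemma ip_shift: "ip (pCons 0 p) (pCons 0 q) = ip p q"
  unfolding ip_def
proof (rule contour_integral_eq)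
  fix x assume "x \<in> path_image ucirc"
  then have x: "x \<in> sphere 0 1" by simp
  have "cnj x = inverse x" "x \<noteq> 0" using sphere_cnj[OF x] sphere_nz[OF x] by auto
  then show "poly (pCons 0 p) x * cnj (poly (pCons 0 q) x) * w x / (\<i> * x) =
        poly p x * cnj (poly q x) * w x / (\<i> * x)"
    by (simp add: field_simps)
qed

lemma ip_pstar_zero:
  assumes ds: "degree s \<le> n" and s0: "coeff s 0 = 0"
  shows "ip (pstar (phi n)) s = 0"
proof (cases "n = 0")
  case True
  then have "s = 0" using ds s0 by (metis degree_0_id le_zero_eq pCons_0_0)
  then show ?thesis by simp
next
  case False
  define u where "u = (\<Sum>j\<le>n. monom (cnj (coeff s j)) (n - j))"
  have du: "degree u < n" unfolding u_def
  proof -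
    have "degree (\<Sum>j\<le>n. monom (cnj (coeff s j)) (n - j)) \<le> n - 1"
    proof (rule degree_sum_le)
      fix j assume "j \<in> {..n}"
      show "degree (monom (cnj (coeff s j)) (n - j)) \<le> n - 1"
      proof (cases "j = 0")
        case True then show ?thesis using s0 by simp
      next
        case False then show ?thesis by (meson degree_monom_le diff_le_mono2 less_one not_less order.trans)
      qed
    qed simp
    then show "degree (\<Sum>j\<le>n. monom (cnj (coeff s j)) (n - j)) < n" using False by linarith
  qed
  have "ip (pstar (phi n)) s = ip u (phi n)"
    unfolding ip_def
  proof (rule contour_integral_eq)
    fix x assume "x \<in> path_image ucirc"
    then have x: "x \<in> sphere 0 1" by simp
    have x0: "x \<noteq> 0" using x by auto
    have "x ^ n * cnj (poly s x) = x ^ n * (\<Sum>j\<le>n. cnj (coeff s j) * inverse x ^ j)"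
      using poly_le_sum[OF ds, of x] sphere_cnj[OF x] by simp
    also have "\<dots> = (\<Sum>j\<le>n. cnj (coeff s j) * x ^ (n - j))"
      by (simp add: sum_distrib_left power_diff x0 field_simps)
    also have "\<dots> = poly u x" by (simp add: u_def poly_sum poly_monom)
    finally have eq: "x ^ n * cnj (poly s x) = poly u x" .
    show "poly (pstar (phi n)) x * cnj (poly s x) * w x / (\<i> * x) =
          poly u x * cnj (poly (phi n) x) * w x / (\<i> * x)"
      using pstar_circ[OF x, of "phi n"] eq[symmetric] by (simp add: algebra_simps)
  qed
  also have "\<dots> = 0" using ip_low'[OF du] .
  finally show ?thesis .
qed

lemma szego1:
  assumes n: "n \<ge> 1"
  shows "smult (kc n) (phi n) = smult (kc (n-1)) (pCons 0 (phi (n-1))) + smult (poly (phi n) 0) (pstar (phi n))"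
proof -
  define a where "a = poly (phi n) 0"
  define R where "R = smult (kc n) (phi n) - smult a (pstar (phi n))"
  have c0: "coeff R 0 = 0"
    by (simp add: R_def a_def coeff_pstar poly_0_coeff_0 coeff_phi_k)
  have dR: "degree R \<le> n" unfolding R_def
    by (intro degree_diff_le) (auto intro: order.trans[OF degree_smult_le] order.trans[OF degree_pstar_le])
  obtain a' R1 where RR: "R = pCons a' R1" by (cases R)
  have a'0: "a' = 0" using c0 RR by simp
  have dR1: "degree R1 \<le> n - 1"
    using dR RR by (cases "R1 = 0") auto
  have coef: "ip R1 (phi k) = (if k = n - 1 then kc (n-1) else 0)" if "k \<le> n - 1" for k
  proof -
    have "ip R1 (phi k) = ip R (pCons 0 (phi k))" using RR a'0 by (simp add: ip_shift)
    also have "\<dots> = kc n * ip (phi n) (pCons 0 (phi k)) - a * ip (pstar (phi n)) (pCons 0 (phi k))"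
      unfolding R_def by (simp add: ip_diff_left ip_smult_left)
    also have "ip (pstar (phi n)) (pCons 0 (phi k)) = 0"
      using that n by (intro ip_pstar_zero) (auto simp: phi_nz)
    also have "ip (phi n) (pCons 0 (phi k)) = cnj (coeff (pCons 0 (phi k)) n) / kc n"
      using that n by (intro ip_top) (auto simp: phi_nz)
    also have "coeff (pCons 0 (phi k)) n = coeff (phi k) (n - 1)"
      using n by (cases n) auto
    finally show ?thesis using that
      by (auto simp: coeff_phi_k coeff_phi_above)
  qed
  have "R1 = (\<Sum>k\<le>n-1. smult (ip R1 (phi k)) (phi k))" by (rule expand[OF dR1])
  also have "\<dots> = (\<Sum>k\<le>n-1. smult (if k = n - 1 then kc (n-1) else 0) (phi k))"
    by (intro sum.cong refl) (simp add: coef)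
  also have "\<dots> = (\<Sum>k\<le>n-1. if k = n-1 then smult (kc (n-1)) (phi (n-1)) else 0)"
    by (intro sum.cong refl) auto
  also have "\<dots> = smult (kc (n-1)) (phi (n-1))" by simp
  finally have "R = smult (kc (n-1)) (pCons 0 (phi (n-1)))" using RR a'0 by simp
  then show ?thesis unfolding R_def a_def by (simp add: algebra_simps)
qed

end


context opuc
begin

lemma kap_rec:
  assumes n: "n \<ge> 1"
  shows "kc n * kc n = kc (n-1) * kc (n-1) + poly (phi n) 0 * cnj (poly (phi n) 0)"
proof -
  obtain m where m: "n = Suc m" using n by (cases n) auto
  have "coeff (smult (kc n) (phi n)) n = coeff (smult (kc (n-1)) (pCons 0 (phi (n-1))) + smult (poly (phi n) 0) (pstar (phi n))) n"
    using szego1[OF n] by simp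
  then show ?thesis using m
    by (simp add: coeff_pstar coeff_phi_k poly_0_coeff_0)
qed

lemma szego1_at:
  assumes n: "n \<ge> 1"
  shows "kc n * poly (phi n) z = kc (n-1) * (z * poly (phi (n-1)) z) + poly (phi n) 0 * poly (pstar (phi n)) z"
proof -
  have "poly (smult (kc n) (phi n)) z = poly (smult (kc (n-1)) (pCons 0 (phi (n-1))) + smult (poly (phi n) 0) (pstar (phi n))) z"
    using szego1[OF n] by simp
  then show ?thesis by simp
qed

lemma szego2:
  assumes n: "n \<ge> 1"
  shows "smult (kc n) (pstar (phi n)) = smult (kc (n-1)) (pstar (phi (n-1))) + smult (cnj (poly (phi n) 0)) (phi n)"
proof (rule poly_eq_on_sphere)
  fix z :: complex assume z: "z \<in> sphere 0 1"
  have cz: "cnj z = inverse z" and z0: "z \<noteq> 0" using sphere_cnj[OF z] sphere_nz[OF z] by auto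
  obtain m where m: "n = Suc m" using n by (cases n) auto
  define a where "a = poly (phi n) 0"
  have E: "kc n * poly (phi n) z = kc m * (z * poly (phi m) z) + a * (z ^ n * cnj (poly (phi n) z))"
    using szego1_at[OF n, of z] pstar_circ[OF z, of "phi n"] m by (simp add: a_def)
  have "cnj (kc n * poly (phi n) z) = cnj (kc m * (z * poly (phi m) z) + a * (z ^ n * cnj (poly (phi n) z)))"
    using E by simp
  then have E2: "kc n * cnj (poly (phi n) z) = kc m * (inverse z * cnj (poly (phi m) z)) + cnj a * (inverse z ^ n * poly (phi n) z)"
    by (simp add: cz)
  have "poly (smult (kc n) (pstar (phi n))) z = z ^ n * (kc n * cnj (poly (phi n) z))"
    using pstar_circ[OF z, of "phi n"] by simp
  also have "\<dots> = z ^ n * (kc m * (inverse z * cnj (poly (phi m) z)) + cnj a * (inverse z ^ n * poly (phi n) z))"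
    using E2 by simp
  also have "\<dots> = kc m * (z ^ m * cnj (poly (phi m) z)) + cnj a * poly (phi n) z"
    using z0 m by (simp add: field_simps power_inverse)
  also have "\<dots> = poly (smult (kc (n-1)) (pstar (phi (n-1))) + smult (cnj (poly (phi n) 0)) (phi n)) z"
    using pstar_circ[OF z, of "phi m"] m by (simp add: a_def)
  finally show "poly (smult (kc n) (pstar (phi n))) z = poly (smult (kc (n-1)) (pstar (phi (n-1))) + smult (cnj (poly (phi n) 0)) (phi n)) z" .
qed

lemma szego2_at:
  assumes n: "n \<ge> 1"
  shows "kc n * poly (pstar (phi n)) z = kc (n-1) * poly (pstar (phi (n-1))) z + cnj (poly (phi n) 0) * poly (phi n) z"
proof -
  have "poly (smult (kc n) (pstar (phi n))) z = poly (smult (kc (n-1)) (pstar (phi (n-1))) + smult (cnj (poly (phi n) 0)) (phi n)) z"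
    using szego2[OF n] by simp
  then show ?thesis by simp
qed

lemma phi0_eq: "phi 0 = [:kc 0:]"
  by (metis coeff_phi_k deg degree_eq_zeroE coeff_pCons_0)

lemma pstar_phi0: "pstar (phi 0) = [:kc 0:]"
proof (rule poly_eqI)
  fix n show "coeff (pstar (phi 0)) n = coeff [:kc 0:] n"
    by (cases n) (auto simp: coeff_pstar coeff_phi_k)
qed

lemma CD:
  "(1 - z * cnj \<zeta>) * (\<Sum>k<m. poly (phi k) z * cnj (poly (phi k) \<zeta>))
     = poly (pstar (phi m)) z * cnj (poly (pstar (phi m)) \<zeta>) - poly (phi m) z * cnj (poly (phi m) \<zeta>)"
proof (induction m)
  case 0
  then show ?case unfolding pstar_phi0 by (simp add: phi0_eq)
next
  case (Suc m)
  define N where "N = Suc m"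
  have N1: "N \<ge> 1" and Nm: "N - 1 = m" by (auto simp: N_def)
  define a where "a = poly (phi N) 0"
  have e1: "kc N * poly (phi N) z = kc m * (z * poly (phi m) z) + a * poly (pstar (phi N)) z"
    using szego1_at[OF N1, of z] Nm by (simp add: a_def)
  have e2: "kc N * poly (pstar (phi N)) z = kc m * poly (pstar (phi m)) z + cnj a * poly (phi N) z"
    using szego2_at[OF N1, of z] Nm by (simp add: a_def)
  have "cnj (kc N * poly (phi N) \<zeta>) = cnj (kc m * (\<zeta> * poly (phi m) \<zeta>) + a * poly (pstar (phi N)) \<zeta>)"
    using szego1_at[OF N1, of \<zeta>] Nm by (simp add: a_def)
  then have e3: "kc N * cnj (poly (phi N) \<zeta>) = kc m * cnj (\<zeta> * poly (phi m) \<zeta>) + cnj a * cnj (poly (pstar (phi N)) \<zeta>)"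
    by simp
  have "cnj (kc N * poly (pstar (phi N)) \<zeta>) = cnj (kc m * poly (pstar (phi m)) \<zeta> + cnj a * poly (phi N) \<zeta>)"
    using szego2_at[OF N1, of \<zeta>] Nm by (simp add: a_def)
  then have e4: "kc N * cnj (poly (pstar (phi N)) \<zeta>) = kc m * cnj (poly (pstar (phi m)) \<zeta>) + a * cnj (poly (phi N) \<zeta>)"
    by simp
  have e5: "kc N * kc N = kc m * kc m + a * cnj a"
    using kap_rec[OF N1] Nm by (simp add: a_def)
  have key: "poly (pstar (phi N)) z * cnj (poly (pstar (phi N)) \<zeta>) - poly (phi N) z * cnj (poly (phi N) \<zeta>)
      = poly (pstar (phi m)) z * cnj (poly (pstar (phi m)) \<zeta>) - (z * poly (phi m) z) * cnj (\<zeta> * poly (phi m) \<zeta>)"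
    by (rule cd_alg[OF e1 e2 e3 e4 e5]) simp
  have "(1 - z * cnj \<zeta>) * (\<Sum>k<Suc m. poly (phi k) z * cnj (poly (phi k) \<zeta>))
     = (1 - z * cnj \<zeta>) * (\<Sum>k<m. poly (phi k) z * cnj (poly (phi k) \<zeta>))
       + (1 - z * cnj \<zeta>) * (poly (phi m) z * cnj (poly (phi m) \<zeta>))"
    by (simp add: algebra_simps)
  also have "\<dots> = poly (pstar (phi m)) z * cnj (poly (pstar (phi m)) \<zeta>) - poly (phi m) z * cnj (poly (phi m) \<zeta>)
       + (1 - z * cnj \<zeta>) * (poly (phi m) z * cnj (poly (phi m) \<zeta>))"
    using Suc.IH by simp
  also have "\<dots> = poly (pstar (phi m)) z * cnj (poly (pstar (phi m)) \<zeta>) - (z * poly (phi m) z) * cnj (\<zeta> * poly (phi m) \<zeta>)"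
    by (simp add: algebra_simps)
  also have "\<dots> = poly (pstar (phi N)) z * cnj (poly (pstar (phi N)) \<zeta>) - poly (phi N) z * cnj (poly (phi N) \<zeta>)"
    using key by simp
  finally show ?case by (simp add: N_def)
qed

end


lemma pderiv_map_cnj: "pderiv (map_poly cnj p) = map_poly cnj (pderiv p)"
  by (rule poly_eqI) (simp add: coeff_pderiv)

context opuc
begin

lemma vp_cont: "continuous_on S (vp w)"
proof -
  have "continuous_on S (deriv w)"
    using holomorphic_deriv[OF w_holo S_open] holomorphic_on_imp_continuous_on by blast
  moreover have "continuous_on S w" using w_holo holomorphic_on_imp_continuous_on by blast
  ultimately show ?thesis unfolding vp_def[abs_def]
    using w_nz by (auto intro!: continuous_intros)
qed

lemma vp_cont_sph: "continuous_on (sphere 0 1) (vp w)"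
  using vp_cont circ_S continuous_on_subset by blast

definition J :: "nat \<Rightarrow> nat \<Rightarrow> complex" where
  "J n k = contour_integral ucirc (\<lambda>\<zeta>. vp w \<zeta> * poly (phi n) \<zeta> * cnj (poly (phi k) \<zeta>) * w \<zeta> / (\<i> * \<zeta>))"

lemma J_int: "(\<lambda>\<zeta>. vp w \<zeta> * poly p \<zeta> * cnj (poly q \<zeta>) * w \<zeta> / (\<i> * \<zeta>)) contour_integrable_on ucirc"
  by (rule cont_int) (auto intro!: continuous_intros w_cont vp_cont_sph)

lemma IBP:
  "ip (pderiv (phi n)) (phi k) = J n k + ip (phi n) (pCons 0 (pderiv (pCons 0 (phi k))))"
proof -
  define Q where "Q = pCons 0 (phi k)"
  define Qc where "Qc = map_poly cnj Q"
  define r where "r = pCons 0 (pderiv Q)"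
  define T where "T = S - {0}"
  have oT: "open T" unfolding T_def using S_open by auto
  define G' where "G' = (\<lambda>x. (poly (pderiv (phi n)) x * poly Qc (inverse x)
          + (poly (pderiv Qc) (inverse x) * - (inverse x ^ Suc (Suc 0))) * poly (phi n) x) * w x
          + deriv w x * (poly (phi n) x * poly Qc (inverse x)))"
  have der: "((\<lambda>x. (poly (phi n) x * poly Qc (inverse x)) * w x) has_field_derivative G' x) (at x within T)"
    if "x \<in> T" for x
  proof -
    have x0: "x \<noteq> 0" and xS: "x \<in> S" using that by (auto simp: T_def)
    have dw: "(w has_field_derivative deriv w x) (at x within T)"
      by (rule holomorphic_derivI[OF w_holo S_open xS])
    have dp: "((\<lambda>x. poly (phi n) x) has_field_derivative poly (pderiv (phi n)) x) (at x within T)"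
      by (rule has_field_derivative_at_within[OF poly_DERIV])
    have dh: "((\<lambda>x. poly Qc (inverse x)) has_field_derivative poly (pderiv Qc) (inverse x) * - (inverse x ^ Suc (Suc 0))) (at x within T)"
      by (rule DERIV_chain2[OF poly_DERIV DERIV_inverse[OF x0]])
    show ?thesis unfolding G'_def by (rule DERIV_mult[OF DERIV_mult[OF dp dh] dw])
  qed
  have "(G' has_contour_integral 0) ucirc"
    by (rule Cauchy_theorem_primitive[OF der]) (use circ_S in \<open>auto simp: T_def\<close>)
  then have G0: "contour_integral ucirc G' = 0" by (rule contour_integral_unique)
  define A1 where "A1 = (\<lambda>x. poly (pderiv (phi n)) x * cnj (poly (phi k) x) * w x / (\<i> * x))"
  define A2 where "A2 = (\<lambda>x. vp w x * poly (phi n) x * cnj (poly (phi k) x) * w x / (\<i> * x))"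
  define A3 where "A3 = (\<lambda>x. poly (phi n) x * cnj (poly r x) * w x / (\<i> * x))"
  have eqG: "G' x = \<i> * (A1 x - A2 x - A3 x)" if "x \<in> path_image ucirc" for x
  proof -
    have x: "x \<in> sphere 0 1" using that by simp
    have cx: "cnj x = inverse x" and x0: "x \<noteq> 0" using sphere_cnj[OF x] sphere_nz[OF x] by auto
    have wx: "w x \<noteq> 0" using w_nz circ_S x by auto
    have h1: "poly Qc (inverse x) = inverse x * cnj (poly (phi k) x)"
      unfolding Qc_def Q_def using poly_cnj[of "pCons 0 (phi k)" x] cx by simp
    have h2: "poly (pderiv Qc) (inverse x) = cnj (poly (pderiv Q) x)"
      unfolding Qc_def pderiv_map_cnj using poly_cnj[of "pderiv Q" x] cx by simp
    have h3: "cnj (poly r x) = inverse x * cnj (poly (pderiv Q) x)"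
      unfolding r_def using cx by simp
    have dw: "deriv w x = - vp w x * w x" unfolding vp_def using wx by simp
    show ?thesis
      unfolding G'_def A1_def A2_def A3_def h1 h2 h3 dw using x0
      by (simp add: field_simps power2_eq_square)
  qed
  have "contour_integral ucirc G' = contour_integral ucirc (\<lambda>x. \<i> * (A1 x - A2 x - A3 x))"
    by (rule contour_integral_eq) (simp add: eqG)
  also have "\<dots> = \<i> * (contour_integral ucirc A1 - contour_integral ucirc A2 - contour_integral ucirc A3)"
    unfolding A1_def A2_def A3_def
    by (simp add: contour_integral_lmul contour_integral_diff contour_integrable_diff ip_int J_int)
  finally have "contour_integral ucirc A1 - contour_integral ucirc A2 = contour_integral ucirc A3"
    using G0 by simp
  then have "contour_integral ucirc A1 = contour_integral ucirc A2 + contour_integral ucirc A3"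
    by (metis add.commute diff_eq_eq)
  then show ?thesis unfolding A1_def A2_def A3_def J_def ip_def r_def Q_def .
qed

lemma ip_r:
  assumes kn: "k < n"
  shows "ip (phi n) (pCons 0 (pderiv (pCons 0 (phi k)))) = (if k = n - 1 then of_nat n * kc (n-1) / kc n else 0)"
proof -
  obtain j where j: "n = Suc j" using kn by (cases n) auto
  have d: "degree (pCons 0 (pderiv (pCons 0 (phi k)))) \<le> n"
  proof -
    have "degree (pderiv (pCons 0 (phi k))) \<le> k"
      by (metis deg degree_pCons_le degree_pderiv diff_Suc_1 diff_le_mono)
    then show ?thesis using kn j
      by (metis Suc_le_mono degree_pCons_le le_trans less_Suc_eq_le)
  qed
  have c: "coeff (pCons 0 (pderiv (pCons 0 (phi k)))) n = of_nat n * coeff (phi k) j"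
    using j by (simp add: coeff_pderiv)
  show ?thesis
    unfolding ip_top[OF d] c using j kn
    by (auto simp: coeff_phi_k coeff_phi_above)
qed

end


context opuc
begin

lemma kern_int:
  assumes KI: "\<forall>m::int. (\<lambda>\<zeta>. (vp w x - vp w \<zeta>) / (x - \<zeta>) * \<zeta> powi m * w \<zeta> / (\<i> * \<zeta>)) contour_integrable_on ucirc"
  shows "(\<lambda>\<zeta>. (vp w x - vp w \<zeta>) / (x - \<zeta>) * poly p \<zeta> * cnj (poly q \<zeta>) * w \<zeta>) contour_integrable_on ucirc"
proof -
  define K where "K = (\<lambda>\<zeta>. (vp w x - vp w \<zeta>) / (x - \<zeta>))"
  have zint: "(\<lambda>\<zeta>. 0::complex) contour_integrable_on ucirc"
    by (rule cont_int) simp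
  have step1: "(\<lambda>\<zeta>. K \<zeta> * \<zeta> powi m * cnj (poly q \<zeta>) * w \<zeta> / (\<i> * \<zeta>)) contour_integrable_on ucirc" for m
  proof (induction q arbitrary: m rule: pCons_induct)
    case 0
    then show ?case using zint by simp
  next
    case (pCons b q)
    have "(\<lambda>\<zeta>. cnj b * (K \<zeta> * \<zeta> powi m * w \<zeta> / (\<i> * \<zeta>)) + K \<zeta> * \<zeta> powi (m - 1) * cnj (poly q \<zeta>) * w \<zeta> / (\<i> * \<zeta>))
            contour_integrable_on ucirc"
      using KI pCons.IH unfolding K_def by (intro contour_integrable_add contour_integrable_lmul) auto
    then show ?case
    proof (rule contour_integrable_eq)
      fix z assume "z \<in> path_image ucirc"
      then have z: "z \<in> sphere 0 1" by simp
      have cz: "cnj z = inverse z" and z0: "z \<noteq> 0" using sphere_cnj[OF z] sphere_nz[OF z] by auto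
      have pz: "z powi (m - 1) = z powi m / z" using z0 by (simp add: power_int_diff)
      show "cnj b * (K z * z powi m * w z / (\<i> * z)) + K z * z powi (m - 1) * cnj (poly q z) * w z / (\<i> * z) =
         K z * z powi m * cnj (poly (pCons b q) z) * w z / (\<i> * z)"
        unfolding pz using z0 cz by (simp add: field_simps)
    qed
  qed
  have step2: "(\<lambda>\<zeta>. K \<zeta> * \<zeta> powi m * poly p \<zeta> * cnj (poly q \<zeta>) * w \<zeta> / (\<i> * \<zeta>)) contour_integrable_on ucirc" for m
  proof (induction p arbitrary: m rule: pCons_induct)
    case 0
    then show ?case using zint by simp
  next
    case (pCons a p)
    have "(\<lambda>\<zeta>. a * (K \<zeta> * \<zeta> powi m * cnj (poly q \<zeta>) * w \<zeta> / (\<i> * \<zeta>)) + K \<zeta> * \<zeta> powi (m + 1) * poly p \<zeta> * cnj (poly q \<zeta>) * w \<zeta> / (\<i> * \<zeta>))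
            contour_integrable_on ucirc"
      using step1 pCons.IH by (intro contour_integrable_add contour_integrable_lmul) auto
    then show ?case
    proof (rule contour_integrable_eq)
      fix z assume "z \<in> path_image ucirc"
      then have z: "z \<in> sphere 0 1" by simp
      have z0: "z \<noteq> 0" using sphere_nz[OF z] by auto
      have pz: "z powi (m + 1) = z powi m * z" using z0 by (simp add: power_int_add_1)
      show "a * (K z * z powi m * cnj (poly q z) * w z / (\<i> * z)) + K z * z powi (m + 1) * poly p z * cnj (poly q z) * w z / (\<i> * z) =
         K z * z powi m * poly (pCons a p) z * cnj (poly q z) * w z / (\<i> * z)"
        unfolding pz using z0 by (simp add: field_simps)
    qed
  qed
  have "(\<lambda>\<zeta>. \<i> * (K \<zeta> * \<zeta> powi 1 * poly p \<zeta> * cnj (poly q \<zeta>) * w \<zeta> / (\<i> * \<zeta>))) contour_integrable_on ucirc"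
    by (intro contour_integrable_lmul step2)
  then show ?thesis
  proof (rule contour_integrable_eq)
    fix z assume "z \<in> path_image ucirc"
    then have z: "z \<in> sphere 0 1" by simp
    have z0: "z \<noteq> 0" using sphere_nz[OF z] by auto
    show "\<i> * (K z * z powi 1 * poly p z * cnj (poly q z) * w z / (\<i> * z)) =
        (vp w x - vp w z) / (x - z) * poly p z * cnj (poly q z) * w z"
    proof -
      have "\<i> * (K z * z powi 1 * poly p z * cnj (poly q z) * w z / (\<i> * z)) = K z * poly p z * cnj (poly q z) * w z"
        using z0 by (simp add: field_simps)
      then show ?thesis unfolding K_def .
    qed
  qed
qed

end


context opuc
begin

lemma claim1:
  assumes KI: "\<forall>m::int. (\<lambda>\<zeta>. (vp w x - vp w \<zeta>) / (x - \<zeta>) * \<zeta> powi m * w \<zeta> / (\<i> * \<zeta>)) contour_integrable_on ucirc"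
    and n1: "n \<ge> 1" and a0: "poly (phi n) 0 \<noteq> 0"
  shows "poly (pderiv (phi n)) x = Acoef w phi n x * poly (phi (n - 1)) x - Bcoef w phi n x * poly (phi n) x"
proof -
  define K where "K = (\<lambda>\<zeta>. (vp w x - vp w \<zeta>) / (x - \<zeta>))"
  define a where "a = poly (phi n) 0"
  have a0': "a \<noteq> 0" using a0 by (simp add: a_def)
  define f1 where "f1 = (\<lambda>\<zeta>. K \<zeta> * poly (phi n) \<zeta> * cnj (poly (pstar (phi n)) \<zeta>) * w \<zeta>)"
  define f2 where "f2 = (\<lambda>\<zeta>. K \<zeta> * poly (phi n) \<zeta> * (cnj (poly (phi n) \<zeta>) - kc n / a * cnj (poly (pstar (phi n)) \<zeta>)) * w \<zeta>)"
  have int1: "f1 contour_integrable_on ucirc"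
    unfolding f1_def K_def by (rule kern_int[OF KI])
  have int2: "f2 contour_integrable_on ucirc"
    using kern_int[OF KI, of "phi n" "phi n - smult (cnj (kc n / a)) (pstar (phi n))"]
    unfolding f2_def K_def by (simp add: algebra_simps)
  define c0 where "c0 = of_nat n * kc (n-1) / kc n"
  have A: "Acoef w phi n x = c0 + \<i> * kc (n-1) / a * x * contour_integral ucirc f1"
    unfolding Acoef_def c0_def f1_def K_def a_def by simp
  have B: "Bcoef w phi n x = - \<i> * contour_integral ucirc f2"
    unfolding Bcoef_def f2_def K_def a_def by simp
  define \<alpha> where "\<alpha> = \<i> * kc (n-1) / a * x * poly (phi (n-1)) x"
  define \<beta> where "\<beta> = \<i> * poly (phi n) x"
  have RHS: "Acoef w phi n x * poly (phi (n - 1)) x - Bcoef w phi n x * poly (phi n) x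
      = c0 * poly (phi (n-1)) x + contour_integral ucirc (\<lambda>\<zeta>. \<alpha> * f1 \<zeta> + \<beta> * f2 \<zeta>)"
  proof -
    have L: "contour_integral ucirc (\<lambda>\<zeta>. \<alpha> * f1 \<zeta> + \<beta> * f2 \<zeta>) = \<alpha> * contour_integral ucirc f1 + \<beta> * contour_integral ucirc f2"
      by (simp add: contour_integral_add contour_integral_lmul contour_integrable_lmul int1 int2)
    have "Acoef w phi n x * poly (phi (n - 1)) x - Bcoef w phi n x * poly (phi n) x
      = c0 * poly (phi (n-1)) x + (\<alpha> * contour_integral ucirc f1 + \<beta> * contour_integral ucirc f2)"
      unfolding A B \<alpha>_def \<beta>_def by (simp add: algebra_simps)
    then show ?thesis unfolding L .
  qed
  define P where "P = (\<lambda>\<zeta>. \<Sum>k<n. poly (phi k) x * cnj (poly (phi k) \<zeta>))"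
  define F1 where "F1 = (\<lambda>k \<zeta>. vp w \<zeta> * poly (phi n) \<zeta> * cnj (poly (phi k) \<zeta>) * w \<zeta> / (\<i> * \<zeta>))"
  define F2 where "F2 = (\<lambda>k \<zeta>. poly (phi n) \<zeta> * cnj (poly (phi k) \<zeta>) * w \<zeta> / (\<i> * \<zeta>))"
  have iF1: "F1 k contour_integrable_on ucirc" for k unfolding F1_def by (rule J_int)
  have iF2: "F2 k contour_integrable_on ucirc" for k unfolding F2_def by (rule ip_int)
  have vF1: "contour_integral ucirc (F1 k) = J n k" for k unfolding F1_def J_def ..
  have vF2: "contour_integral ucirc (F2 k) = ip (phi n) (phi k)" for k unfolding F2_def ip_def ..
  define g where "g = (\<lambda>\<zeta>. \<Sum>k<n. poly (phi k) x * (F1 k \<zeta> - vp w x * F2 k \<zeta>))"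
  have S1x: "kc (n-1) * (x * poly (phi (n-1)) x) = kc n * poly (phi n) x - a * poly (pstar (phi n)) x"
    using szego1_at[OF n1, of x] by (simp add: a_def)
  have eq: "\<alpha> * f1 \<zeta> + \<beta> * f2 \<zeta> = g \<zeta>" if "\<zeta> \<in> path_image ucirc" for \<zeta>
  proof -
    have z: "\<zeta> \<in> sphere 0 1" using that by simp
    have cz: "cnj \<zeta> = inverse \<zeta>" and z0: "\<zeta> \<noteq> 0" using sphere_cnj[OF z] sphere_nz[OF z] by auto
    define C where "C = cnj (poly (phi n) \<zeta>)"
    define Cs where "Cs = cnj (poly (pstar (phi n)) \<zeta>)"
    define X where "X = poly (phi n) x"
    define Xs where "Xs = poly (pstar (phi n)) x"
    define Y where "Y = kc (n-1) * (x * poly (phi (n-1)) x)"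
    have S1x': "Y = kc n * X - a * Xs" unfolding Y_def X_def Xs_def by (rule S1x)
    have CDx: "X * C - Xs * Cs = - ((1 - x * cnj \<zeta>) * P \<zeta>)"
      unfolding X_def C_def Xs_def Cs_def P_def using CD[of x \<zeta> n] by simp
    have KK: "K \<zeta> * (\<zeta> - x) = vp w \<zeta> - vp w x"
      unfolding K_def by (cases "\<zeta> = x") (auto simp: field_simps)
    have "\<alpha> * f1 \<zeta> + \<beta> * f2 \<zeta> = \<i> * K \<zeta> * poly (phi n) \<zeta> * w \<zeta> * (Y * Cs / a + X * C - X * kc n * Cs / a)"
      unfolding \<alpha>_def \<beta>_def f1_def f2_def Y_def X_def C_def Cs_def by (simp add: algebra_simps)
    also have "Y * Cs / a + X * C - X * kc n * Cs / a = X * C - Xs * Cs"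
      unfolding S1x' using a0' by (simp add: field_simps)
    also have "\<dots> = - ((1 - x * cnj \<zeta>) * P \<zeta>)" by (rule CDx)
    also have "\<i> * K \<zeta> * poly (phi n) \<zeta> * w \<zeta> * - ((1 - x * cnj \<zeta>) * P \<zeta>)
        = (K \<zeta> * (\<zeta> - x)) * poly (phi n) \<zeta> * P \<zeta> * w \<zeta> / (\<i> * \<zeta>)"
      using z0 unfolding cz by (simp add: field_simps)
    also have "\<dots> = (vp w \<zeta> - vp w x) * poly (phi n) \<zeta> * P \<zeta> * w \<zeta> / (\<i> * \<zeta>)" by (simp add: KK)
    also have "\<dots> = (\<Sum>k<n. (vp w \<zeta> - vp w x) * poly (phi n) \<zeta> * (poly (phi k) x * cnj (poly (phi k) \<zeta>)) * w \<zeta> / (\<i> * \<zeta>))"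
      unfolding P_def by (simp add: sum_distrib_left sum_distrib_right sum_divide_distrib)
    also have "\<dots> = g \<zeta>"
      unfolding g_def F1_def F2_def using z0 by (intro sum.cong refl) (simp add: field_simps)
    finally show ?thesis .
  qed
  have "contour_integral ucirc (\<lambda>\<zeta>. \<alpha> * f1 \<zeta> + \<beta> * f2 \<zeta>) = contour_integral ucirc g"
    by (rule contour_integral_eq) (rule eq)
  also have "\<dots> = (\<Sum>k<n. poly (phi k) x * (J n k - vp w x * ip (phi n) (phi k)))"
    unfolding g_def
    by (subst contour_integral_sum)
       (auto simp: contour_integral_lmul contour_integral_diff contour_integrable_lmul contour_integrable_diff iF1 iF2 vF1 vF2)
  also have "\<dots> = (\<Sum>k<n. poly (phi k) x * J n k)"
    by (intro sum.cong refl) (auto simp: ip_orth)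
  finally have Ig: "contour_integral ucirc (\<lambda>\<zeta>. \<alpha> * f1 \<zeta> + \<beta> * f2 \<zeta>) = (\<Sum>k<n. poly (phi k) x * J n k)" .
  have dd: "degree (pderiv (phi n)) \<le> n - 1" by (simp add: degree_pderiv)
  have set: "{..n-1} = {..<n}" using n1 by auto
  have "poly (pderiv (phi n)) x = poly (\<Sum>k\<le>n-1. smult (ip (pderiv (phi n)) (phi k)) (phi k)) x"
    using expand[OF dd] by metis
  also have "\<dots> = (\<Sum>k<n. ip (pderiv (phi n)) (phi k) * poly (phi k) x)"
    unfolding set by (simp add: poly_sum)
  also have "\<dots> = (\<Sum>k<n. J n k * poly (phi k) x + (if k = n - 1 then c0 else 0) * poly (phi k) x)"
    by (intro sum.cong refl) (auto simp: IBP ip_r c0_def algebra_simps)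
  also have "\<dots> = (\<Sum>k<n. poly (phi k) x * J n k) + c0 * poly (phi (n-1)) x"
  proof -
    have "(\<Sum>k<n. (if k = n - 1 then c0 else 0) * poly (phi k) x) = (\<Sum>k<n. if k = n - 1 then c0 * poly (phi (n-1)) x else 0)"
      by (intro sum.cong refl) auto
    also have "\<dots> = c0 * poly (phi (n-1)) x" using n1 by simp
    finally show ?thesis by (simp add: sum.distrib mult.commute)
  qed
  finally show ?thesis unfolding RHS Ig by simp
qed

end


lemma deriv_poly: "deriv (poly p) x = poly (pderiv p) x"
  by (rule DERIV_imp_deriv) (rule poly_DERIV)

context opuc
begin

lemma three_term:
  assumes n2: "n \<ge> 2"
  shows "poly (phi (n-1)) 0 * kc (n-1) * poly (phi n) x
    = kc n * poly (phi (n-1)) 0 * x * poly (phi (n-1)) x + kc (n-1) * poly (phi n) 0 * poly (phi (n-1)) x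
      - kc (n-2) * poly (phi n) 0 * x * poly (phi (n-2)) x"
proof -
  have n1: "n \<ge> 1" and m1: "n - 1 \<ge> 1" and nn: "n - 1 - 1 = n - 2" using n2 by auto
  define a where "a = poly (phi n) 0"
  define b where "b = poly (phi (n-1)) 0"
  have e1: "kc n * poly (phi n) x = kc (n-1) * (x * poly (phi (n-1)) x) + a * poly (pstar (phi n)) x"
    using szego1_at[OF n1] by (simp add: a_def)
  have e2: "kc (n-1) * poly (phi (n-1)) x = kc (n-2) * (x * poly (phi (n-2)) x) + b * poly (pstar (phi (n-1))) x"
    using szego1_at[OF m1] nn by (simp add: b_def)
  have e3: "kc n * poly (pstar (phi n)) x = kc (n-1) * poly (pstar (phi (n-1))) x + cnj a * poly (phi n) x"
    using szego2_at[OF n1] by (simp add: a_def)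
  have e4: "kc n * kc n = kc (n-1) * kc (n-1) + a * cnj a"
    using kap_rec[OF n1] by (simp add: a_def)
  have "kc (n-1) * (b * kc (n-1) * poly (phi n) x) = kc (n-1) * (kc n * b * x * poly (phi (n-1)) x + kc (n-1) * a * poly (phi (n-1)) x
      - kc (n-2) * a * x * poly (phi (n-2)) x)"
  proof -
    have "kc n * b * (a * poly (pstar (phi n)) x) = kc (n-1) * a * (b * poly (pstar (phi (n-1))) x) + a * cnj a * b * poly (phi n) x"
      using arg_cong[OF e3, of "\<lambda>t. a * b * t"] by (simp add: algebra_simps)
    then have "kc n * b * (kc n * poly (phi n) x - kc (n-1) * (x * poly (phi (n-1)) x))
        = kc (n-1) * a * (kc (n-1) * poly (phi (n-1)) x - kc (n-2) * (x * poly (phi (n-2)) x)) + a * cnj a * b * poly (phi n) x"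
      using e1 e2 by (simp add: algebra_simps)
    then have "b * poly (phi n) x * (kc n * kc n - a * cnj a)
        = kc n * b * kc (n-1) * x * poly (phi (n-1)) x + kc (n-1) * a * kc (n-1) * poly (phi (n-1)) x
          - kc (n-1) * a * kc (n-2) * x * poly (phi (n-2)) x"
      by (simp add: algebra_simps)
    then show ?thesis unfolding e4 by (simp add: algebra_simps)
  qed
  then show ?thesis by (simp add: a_def b_def)
qed

lemma claim3:
  assumes KI: "\<forall>m::int. (\<lambda>\<zeta>. (vp w x - vp w \<zeta>) / (x - \<zeta>) * \<zeta> powi m * w \<zeta> / (\<i> * \<zeta>)) contour_integrable_on ucirc"
    and n2: "n \<ge> 2" and a0: "poly (phi n) 0 \<noteq> 0" and b0: "poly (phi (n - 1)) 0 \<noteq> 0" and x0: "x \<noteq> 0"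
  shows "Lop2 w phi n (poly (phi (n - 1))) x
           = Acoef w phi (n - 1) x / x * (poly (phi (n - 1)) 0 * of_real (kap phi (n - 1)))
               / (poly (phi n) 0 * of_real (kap phi (n - 2))) * poly (phi n) x"
proof -
  have m1: "n - 1 \<ge> 1" and nn: "n - 1 - 1 = n - 2" using n2 by auto
  have c1: "poly (pderiv (phi (n-1))) x = Acoef w phi (n-1) x * poly (phi (n - 2)) x - Bcoef w phi (n-1) x * poly (phi (n-1)) x"
    using claim1[OF KI m1 b0] nn by simp
  define A' where "A' = Acoef w phi (n-1) x"
  define a where "a = poly (phi n) 0"
  define b where "b = poly (phi (n-1)) 0"
  have tt: "b * kc (n-1) * poly (phi n) x
    = kc n * b * x * poly (phi (n-1)) x + kc (n-1) * a * poly (phi (n-1)) x - kc (n-2) * a * x * poly (phi (n-2)) x"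
    using three_term[OF n2, of x] by (simp add: a_def b_def)
  have a0': "a \<noteq> 0" using a0 by (simp add: a_def)
  have "Lop2 w phi n (poly (phi (n - 1))) x
      = A' * (- poly (phi (n - 2)) x + kc (n-1) / (x * kc (n-2)) * poly (phi (n-1)) x
              + kc n * b / (kc (n-2) * a) * poly (phi (n-1)) x)"
    unfolding Lop2_def deriv_poly c1 A'_def a_def b_def by (simp add: algebra_simps)
  also have "- poly (phi (n - 2)) x + kc (n-1) / (x * kc (n-2)) * poly (phi (n-1)) x
              + kc n * b / (kc (n-2) * a) * poly (phi (n-1)) x
           = (kc (n-1) * a * poly (phi (n-1)) x + kc n * b * x * poly (phi (n-1)) x - kc (n-2) * a * x * poly (phi (n - 2)) x)
              / (x * a * kc (n-2))"
    using x0 a0' by (simp add: field_simps)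
  also have "kc (n-1) * a * poly (phi (n-1)) x + kc n * b * x * poly (phi (n-1)) x - kc (n-2) * a * x * poly (phi (n - 2)) x
      = b * kc (n-1) * poly (phi n) x" using tt by (simp add: algebra_simps)
  finally show ?thesis unfolding A'_def a_def b_def using x0 a0' by (simp add: field_simps)
qed

end


lemma dq_cont:
  fixes f :: "complex \<Rightarrow> complex"
  assumes "open U" and holf: "f holomorphic_on U"
  shows "continuous_on (U \<times> U) (\<lambda>(x,y). if y = x then deriv f x else (f y - f x) / (y - x))"
proof -
  have conf: "continuous_on U f"
    by (metis holf holomorphic_on_imp_continuous_on)
  have con_ff: "continuous (at (x,z)) (\<lambda>(x,y). (f y - f x) / (y-x))"
               if "x \<in> U" "z \<in> U" "x \<noteq> z" for x z
    using that conf
    apply (simp add: split_def continuous_on_eq_continuous_at \<open>open U\<close>)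
    apply (simp | rule continuous_intros continuous_within_compose2 [where g=f])+
    done
  have con_fstsnd: "continuous_on UNIV (\<lambda>x. (fst x - snd x) ::complex)"
    by (rule continuous_intros)+
  have open_uu_Id: "open (U \<times> U - Id)"
  proof (rule open_Diff)
    show "open (U \<times> U)"
      by (simp add: open_Times \<open>open U\<close>)
    show "closed (Id :: complex rel)"
      using continuous_closed_preimage_constant [OF con_fstsnd closed_UNIV, of 0]
      by (auto simp: Id_fstsnd_eq algebra_simps)
  qed
  have con_derf: "continuous (at z) (deriv f)" if "z \<in> U" for z
    by (meson analytic_at analytic_at_imp_isCont assms(1) holf holomorphic_deriv that)
  have tendsto_f': "((\<lambda>(x,y). if y = x then deriv f (x)
                              else (f (y) - f (x)) / (y-x)) \<longlongrightarrow> deriv f x)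
                    (at (x, x) within U \<times> U)" if "x \<in> U" for x
  proof (rule Lim_withinI)
    fix e::real assume "0 < e"
    obtain k1 where "k1>0" and k1: "\<And>x'. norm (x' - x) \<le> k1 \<Longrightarrow> norm (deriv f x' - deriv f x) < e"
      using \<open>0 < e\<close> continuous_within_E [OF con_derf [OF \<open>x \<in> U\<close>]]
      by (metis UNIV_I dist_norm)
    obtain k2 where "k2>0" and k2: "ball x k2 \<subseteq> U"
      by (blast intro: openE [OF \<open>open U\<close>] \<open>x \<in> U\<close>)
    have neq: "norm ((f z' - f x') / (z' - x') - deriv f x) \<le> e"
                  if "z' \<noteq> x'" and less_k1: "norm (x'-x, z'-x) < k1" and less_k2: "norm (x'-x, z'-x) < k2"
               for x' z'
    proof -
      have cs_less: "w \<in> closed_segment x' z' \<Longrightarrow> cmod (w-x) \<le> norm (x'-x, z'-x)" for w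
        using segment_furthest_le [of w x' z' x]
        by (metis (no_types) dist_commute dist_norm norm_fst_le norm_snd_le order_trans)
      have derf_le: "w \<in> closed_segment x' z' \<Longrightarrow> z' \<noteq> x' \<Longrightarrow> cmod (deriv f w - deriv f x) \<le> e" for w
        by (blast intro: cs_less less_k1 k1 [unfolded divide_const_simps dist_norm] less_imp_le le_less_trans)
      have f_has_der: "\<And>x. x \<in> U \<Longrightarrow> (f has_field_derivative deriv f x) (at x within U)"
        by (metis DERIV_deriv_iff_field_differentiable at_within_open holf holomorphic_on_def \<open>open U\<close>)
      have "closed_segment x' z' \<subseteq> U"
        by (rule order_trans [OF _ k2]) (simp add: cs_less  le_less_trans [OF _ less_k2] dist_complex_def norm_minus_commute subset_iff)
      then have cint_derf: "(deriv f has_contour_integral f z' - f x') (linepath x' z')"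
        using contour_integral_primitive [OF f_has_der valid_path_linepath, of x' z'] by simp
      then have *: "((\<lambda>x. deriv f x / (z' - x')) has_contour_integral (f z' - f x') / (z' - x')) (linepath x' z')"
        by (rule has_contour_integral_div)
      have "norm ((f z' - f x') / (z' - x') - deriv f x) \<le> e/norm(z' - x') * norm(z' - x')"
        apply (rule has_contour_integral_bound_linepath [OF has_contour_integral_diff [OF *]])
        using has_contour_integral_div [where c = "z' - x'", OF has_contour_integral_const_linepath [of "deriv f x" z' x']]
               \<open>e > 0\<close>  \<open>z' \<noteq> x'\<close>
        apply (auto simp: norm_divide divide_simps derf_le)
        done
      also have "\<dots> \<le> e" using \<open>0 < e\<close> by simp
      finally show ?thesis .
    qed
    show "\<exists>d>0. \<forall>xa\<in>U \<times> U.
                0 < dist xa (x, x) \<and> dist xa (x, x) < d \<longrightarrow>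
                dist (case xa of (x, y) \<Rightarrow> if y = x then deriv f x else (f y - f x) / (y-x)) (deriv f x) \<le> e"
      apply (rule_tac x="min k1 k2" in exI)
      using \<open>k1>0\<close> \<open>k2>0\<close> \<open>e>0\<close>
      by (force simp: dist_norm neq intro: dual_order.strict_trans2 k1 less_imp_le norm_fst_le)
  qed
  have "\<And>x y. \<lbrakk>x \<in> U; y \<in> U; y \<noteq> x\<rbrakk> \<Longrightarrow> (\<lambda>(x, y). if y = x then deriv f x else (f y - f x) / (y - x)) \<midarrow>(x, y)\<rightarrow> (f y - f x) / (y - x)"
    apply (rule Lim_transform_within_open [OF _ open_uu_Id, where f = "(\<lambda>(x,y). (f y - f x) / (y-x))"])
    using con_ff by (auto simp: continuous_within)
  then show ?thesis
    unfolding continuous_on_eq_continuous_within continuous_within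
    by (fastforce simp add: tendsto_f' intro: Lim_at_imp_Lim_at_within)
qed

lemma cint_param_cont:
  fixes F :: "complex \<Rightarrow> complex \<Rightarrow> complex"
  assumes U: "open U" and int: "\<And>x. x \<in> U \<Longrightarrow> F x contour_integrable_on ucirc"
    and cont: "continuous_on (U \<times> sphere 0 1) (\<lambda>(x,y). F x y)"
  shows "continuous_on U (\<lambda>x. contour_integral ucirc (F x))"
  unfolding Elementary_Metric_Spaces.continuous_on_iff
proof (intro ballI allI impI)
  fix x and e :: real assume x: "x \<in> U" and e: "0 < e"
  obtain \<delta> where \<delta>: "\<delta> > 0" "cball x \<delta> \<subseteq> U" using open_contains_cball U x by blast
  let ?TZ = "cball x \<delta> \<times> sphere (0::complex) 1"
  have "continuous_on ?TZ (\<lambda>(x,y). F x y)"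
    by (rule continuous_on_subset[OF cont]) (use \<delta> in auto)
  then have "uniformly_continuous_on ?TZ (\<lambda>(x,y). F x y)"
    by (intro compact_uniformly_continuous compact_Times) auto
  moreover have e4: "e / (4 * pi) > 0" using e by simp
  ultimately obtain \<eta> where \<eta>: "\<eta> > 0"
    and \<eta>': "\<And>p p'. p \<in> ?TZ \<Longrightarrow> p' \<in> ?TZ \<Longrightarrow> dist p' p < \<eta> \<Longrightarrow>
        dist ((\<lambda>(x,y). F x y) p') ((\<lambda>(x,y). F x y) p) < e / (4 * pi)"
    by (rule uniformly_continuous_onE) blast
  show "\<exists>d>0. \<forall>x'\<in>U. dist x' x < d \<longrightarrow> dist (contour_integral ucirc (F x')) (contour_integral ucirc (F x)) < e"
  proof (intro exI[of _ "min \<delta> \<eta>"] conjI ballI impI)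
    show "min \<delta> \<eta> > 0" using \<delta> \<eta> by simp
    fix x' assume x'U: "x' \<in> U" and dx: "dist x' x < min \<delta> \<eta>"
    have bound: "norm (F x' y - F x y) \<le> e / (4 * pi)" if "norm (y - 0) = 1" for y
    proof -
      have "(x, y) \<in> ?TZ" "(x', y) \<in> ?TZ" using that dx \<delta> by (auto simp: dist_commute)
      moreover have "dist (x', y) (x, y) < \<eta>" using dx by (simp add: dist_Pair_Pair)
      ultimately have "dist (F x' y) (F x y) < e / (4 * pi)" using \<eta>' by fastforce
      then show ?thesis by (simp add: dist_norm)
    qed
    have "((\<lambda>y. F x' y - F x y) has_contour_integral (contour_integral ucirc (F x') - contour_integral ucirc (F x))) ucirc"
      using int x'U x by (intro has_contour_integral_diff has_contour_integral_integral) auto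
    then have "norm (contour_integral ucirc (F x') - contour_integral ucirc (F x)) \<le> e / (4 * pi) * (2 * pi * 1)"
      by (rule has_contour_integral_bound_circlepath) (use e4 bound in auto)
    also have "\<dots> < e" using e by simp
    finally show "dist (contour_integral ucirc (F x')) (contour_integral ucirc (F x)) < e"
      by (simp add: dist_norm)
  qed
qed



context opuc
begin

lemma vp_holo: "vp w holomorphic_on S"
proof -
  have "(\<lambda>z. - deriv w z / w z) holomorphic_on S"
    using holomorphic_deriv[OF w_holo S_open] w_holo w_nz S_open by (intro holomorphic_intros) auto
  then show ?thesis unfolding vp_def[abs_def] .
qed

lemma Acoef_cont: "continuous_on S (Acoef w phi n)"
proof -
  define D where "D = (\<lambda>x y. if y = x then deriv (vp w) x else (vp w y - vp w x) / (y - x))"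
  have Dc: "continuous_on (S \<times> S) (\<lambda>(x,y). D x y)"
    unfolding D_def by (rule dq_cont[OF S_open vp_holo])
  define F where "F = (\<lambda>x \<zeta>. D x \<zeta> * poly (phi n) \<zeta> * cnj (poly (pstar (phi n)) \<zeta>) * w \<zeta>)"
  have c1: "continuous_on (S \<times> sphere 0 1) (\<lambda>p. D (fst p) (snd p))"
    using continuous_on_subset[OF Dc, of "S \<times> sphere 0 1"] circ_S by (auto simp: split_def)
  have c2: "continuous_on (S \<times> sphere 0 1) (\<lambda>p. w (snd p))"
    by (rule continuous_on_compose2[OF w_cont continuous_on_snd]) auto
  have Fc: "continuous_on (S \<times> sphere 0 1) (\<lambda>(x,y). F x y)"
    unfolding F_def split_def
    by (intro continuous_intros c1 c2)
  have Fint: "F x contour_integrable_on ucirc" if "x \<in> S" for x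
  proof (rule cont_int)
    have "continuous_on (sphere 0 1) ((\<lambda>(x,y). F x y) \<circ> (\<lambda>y. (x, y)))"
      by (rule continuous_on_compose) (auto intro!: continuous_intros continuous_on_subset[OF Fc] simp: that)
    then show "continuous_on (sphere 0 1) (F x)" by (simp add: o_def)
  qed
  have IC: "continuous_on S (\<lambda>x. contour_integral ucirc (F x))"
    by (rule cint_param_cont[OF S_open Fint Fc])
  have eqI: "contour_integral ucirc (\<lambda>\<zeta>. (vp w x - vp w \<zeta>) / (x - \<zeta>) * poly (phi n) \<zeta> * cnj (poly (pstar (phi n)) \<zeta>) * w \<zeta>)
      = contour_integral ucirc (F x)" for x
  proof (rule contour_integral_spike_finite_simple_path[of "{x}"])
    show "simple_path ucirc" by (simp add: simple_path_circlepath)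
    fix \<zeta> assume "\<zeta> \<in> path_image ucirc - {x}"
    then have "\<zeta> \<noteq> x" by auto
    then have "(vp w x - vp w \<zeta>) / (x - \<zeta>) = D x \<zeta>"
      unfolding D_def by (metis minus_diff_eq minus_divide_divide)
    then show "(vp w x - vp w \<zeta>) / (x - \<zeta>) * poly (phi n) \<zeta> * cnj (poly (pstar (phi n)) \<zeta>) * w \<zeta> = F x \<zeta>"
      unfolding F_def by simp
  qed auto
  have "continuous_on S (\<lambda>x. of_real (real n * kap phi (n - 1) / kap phi n)
     + \<i> * of_real (kap phi (n - 1)) / poly (phi n) 0 * x * contour_integral ucirc (F x))"
    by (intro continuous_intros IC)
  then show ?thesis
    by (rule continuous_on_eq) (simp only: Acoef_def eqI)
qed

end


theorem mainTheorem2: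
  fixes w :: "complex \<Rightarrow> complex" and S :: "complex set"
    and phi :: "nat \<Rightarrow> complex poly" and n :: nat and z :: complex
  assumes S_open: "open S" and circ_S: "sphere 0 1 \<subseteq> S"
    and w_holo: "w holomorphic_on S" and w_nz: "\<forall>x\<in>S. w x \<noteq> 0"
    and w_pos: "\<forall>\<zeta>\<in>sphere 0 1. Im (w \<zeta>) = 0 \<and> Re (w \<zeta>) > 0"
    and w_norm: "contour_integral ucirc (\<lambda>\<zeta>. w \<zeta> / (\<i> * \<zeta>)) = 1"
    and moments: "\<forall>m::int. (\<lambda>\<zeta>. \<zeta> powi m * w \<zeta> / (\<i> * \<zeta>)) contour_integrable_on ucirc"
    and kernel_int: "\<forall>x\<in>S. \<forall>m::int.
        (\<lambda>\<zeta>. (vp w x - vp w \<zeta>) / (x - \<zeta>) * \<zeta> powi m * w \<zeta> / (\<i> * \<zeta>)) contour_integrable_on ucirc"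
    and phi_deg: "\<forall>k. degree (phi k) = k"
    and phi_lead: "\<forall>k. Im (lead_coeff (phi k)) = 0 \<and> Re (lead_coeff (phi k)) > 0"
    and phi_orth: "\<forall>j k. contour_integral ucirc
        (\<lambda>\<zeta>. poly (phi j) \<zeta> * cnj (poly (phi k) \<zeta>) * w \<zeta> / (\<i> * \<zeta>)) = (if j = k then 1 else 0)"
    and n2: "n \<ge> 2"
    and phin0: "poly (phi n) 0 \<noteq> 0" and phin10: "poly (phi (n - 1)) 0 \<noteq> 0"
    and zS: "z \<in> S" and z0: "z \<noteq> 0"
  shows "poly (pderiv (phi n)) z
           = Acoef w phi n z * poly (phi (n - 1)) z - Bcoef w phi n z * poly (phi n) z
       \<and> Lop1 w phi n (poly (phi n)) z = Acoef w phi n z * poly (phi (n - 1)) z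
       \<and> Lop2 w phi n (poly (phi (n - 1))) z
           = Acoef w phi (n - 1) z / z * (poly (phi (n - 1)) 0 * of_real (kap phi (n - 1)))
               / (poly (phi n) 0 * of_real (kap phi (n - 2))) * poly (phi n) z
       \<and> (Acoef w phi n z \<noteq> 0 \<longrightarrow>
           Lop2 w phi n (\<lambda>x. Lop1 w phi n (poly (phi n)) x / Acoef w phi n x) z
           = Acoef w phi (n - 1) z / z * (poly (phi (n - 1)) 0 * of_real (kap phi (n - 1)))
               / (poly (phi n) 0 * of_real (kap phi (n - 2))) * poly (phi n) z)"
  proof -
  interpret opuc w S phi
    by (rule opuc.intro) (fact S_open circ_S w_holo w_nz phi_deg phi_lead phi_orth)+
  have KI: "\<forall>m::int. (\<lambda>\<zeta>. (vp w x - vp w \<zeta>) / (x - \<zeta>) * \<zeta> powi m * w \<zeta> / (\<i> * \<zeta>)) contour_integrable_on ucirc"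
    if "x \<in> S" for x
    using kernel_int that by blast
  have n1: "n \<ge> 1" using n2 by simp
  have c1x: "poly (pderiv (phi n)) x = Acoef w phi n x * poly (phi (n - 1)) x - Bcoef w phi n x * poly (phi n) x"
    if "x \<in> S" for x
    by (rule claim1[OF KI[OF that] n1 phin0])
  have L1: "Lop1 w phi n (poly (phi n)) x = Acoef w phi n x * poly (phi (n - 1)) x" if "x \<in> S" for x
    unfolding Lop1_def deriv_poly c1x[OF that] by simp
  have c3: "Lop2 w phi n (poly (phi (n - 1))) z
           = Acoef w phi (n - 1) z / z * (poly (phi (n - 1)) 0 * of_real (kap phi (n - 1)))
               / (poly (phi n) 0 * of_real (kap phi (n - 2))) * poly (phi n) z"
    by (rule claim3[OF KI[OF zS] n2 phin0 phin10 z0])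
  have c4: "Lop2 w phi n (\<lambda>x. Lop1 w phi n (poly (phi n)) x / Acoef w phi n x) z
           = Acoef w phi (n - 1) z / z * (poly (phi (n - 1)) 0 * of_real (kap phi (n - 1)))
               / (poly (phi n) 0 * of_real (kap phi (n - 2))) * poly (phi n) z"
    if Az: "Acoef w phi n z \<noteq> 0"
  proof -
    define f where "f = (\<lambda>x. Lop1 w phi n (poly (phi n)) x / Acoef w phi n x)"
    define T where "T = S \<inter> Acoef w phi n -` (- {0})"
    have oT: "open T" unfolding T_def
      by (rule continuous_open_preimage[OF Acoef_cont S_open]) auto
    have zT: "z \<in> T" using zS Az by (simp add: T_def)
    have fT: "f x = poly (phi (n - 1)) x" if "x \<in> T" for x
      using that L1 by (simp add: T_def f_def)
    have ev: "\<forall>\<^sub>F x in nhds z. f x = poly (phi (n - 1)) x"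
      using eventually_nhds_in_open[OF oT zT] by (rule eventually_mono) (rule fT)
    have "deriv f z = deriv (poly (phi (n - 1))) z"
      by (rule deriv_cong_ev[OF ev refl])
    moreover have "f z = poly (phi (n - 1)) z" by (rule fT[OF zT])
    ultimately have "Lop2 w phi n f z = Lop2 w phi n (poly (phi (n - 1))) z"
      unfolding Lop2_def by simp
    then show ?thesis using c3 unfolding f_def by simp
  qed
  show ?thesis
    using c1x[OF zS] L1[OF zS] c3 c4 by blast
qed


end
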